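(* Let $S$ be the set of positive integers $\ell$ for which there exists $n_0$ with $\Delta_\ell(n)>0$ for all $n\geq n_0$, and for each $\ell\in S$ let $n_0(\ell)$ be an integer such that $\Delta_\ell(n)>0$ for all $n\ge n_0(\ell)$. If $S$ is infinite, then the sequence $(n_0(\ell))_{\ell\in S}$ is unbounded.
   Context: For integers $n\geq 0$ let $S_n$ be the symmetric group on $n$ elements ($S_0$ trivial). For an integer $\ell\geq 1$ let $C_{\ell,n}=\{(\pi_1,\dots,\pi_\ell)\in S_n^\ell : \pi_j\pi_k=\pi_k\pi_j \text{ for all } 1\le j,k\le \ell\}$ and $N_\ell(n)=|C_{\ell,n}|/|S_n|$ (so $N_\ell(0)=1$). Define $\Delta_\ell(n)=N_\ell(n)^2-N_\ell(n-1)N_\ell(n+1)$ for $n\geq 1$. *)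

theory Defs
  imports Complex_Main "HOL-Combinatorics.Permutations"
begin

text \<open>S_n is realised as the permutations of {0..<n} (functions nat => nat that
permute {..<n}); an l-tuple is a function from {1..l}, extended by id elsewhere.\<close>

definition comm_tuples :: "nat \<Rightarrow> nat \<Rightarrow> (nat \<Rightarrow> nat \<Rightarrow> nat) set" where
  "comm_tuples l n = {p. (\<forall>j\<in>{1..l}. p j permutes {..<n})
                        \<and> (\<forall>j. j \<notin> {1..l} \<longrightarrow> p j = id)
                        \<and> (\<forall>j\<in>{1..l}. \<forall>k\<in>{1..l}. p j \<circ> p k = p k \<circ> p j)}"

definition N_comm :: "nat \<Rightarrow> nat \<Rightarrow> real" where
  "N_comm l n = real (card (comm_tuples l n)) / fact n"

definition Delta :: "nat \<Rightarrow> nat \<Rightarrow> real" where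
  "Delta l n = (N_comm l n)\<^sup>2 - N_comm l (n - 1) * N_comm l (n + 1)"

definition S_eventually_pos :: "nat set" where
  "S_eventually_pos = {l. l \<ge> 1 \<and> (\<exists>n0::nat. \<forall>n. n \<ge> 1 \<and> n \<ge> n0 \<longrightarrow> Delta l n > 0)}"

end

theory Submission
  imports Defs
begin


fun A :: "nat \<Rightarrow> nat" where
  "A n = (if n \<le> 4 then max 1 n else 3 * A (n - 3))"

declare A.simps[simp del]

lemma A_ge5: "n \<ge> 5 \<Longrightarrow> A n = 3 * A (n - 3)"
  by (subst A.simps) simp

lemma A_vals: "A 0 = 1" "A 1 = 1" "A 2 = 2" "A 3 = 3" "A 4 = 4"
  "A 5 = 6" "A 6 = 9" "A 7 = 12" "A 8 = 18"
  "A (Suc 0) = 1" "A (Suc (Suc 0)) = 2" "A (Suc (Suc (Suc 0))) = 3"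
proof -
  show a: "A 0 = 1" "A 1 = 1" "A 2 = 2" "A 3 = 3" "A 4 = 4"
    by (subst A.simps; simp)+
  show "A 5 = 6" using A_ge5[of 5] a by simp
  show "A 6 = 9" using A_ge5[of 6] a by simp
  show "A 7 = 12" using A_ge5[of 7] a by simp
  have "A 5 = 6" using A_ge5[of 5] a by simp
  then show "A 8 = 18" using A_ge5[of 8] by simp
  show "A (Suc 0) = 1" "A (Suc (Suc 0)) = 2" "A (Suc (Suc (Suc 0))) = 3"
    using a by (simp_all add: numeral_eq_Suc)
qed

lemma A_small_k: "1 \<le> k \<Longrightarrow> k \<le> 4 \<Longrightarrow> k * A m \<le> A (k + m)"
proof (induction m rule: less_induct)
  case (less m)
  show ?case
  proof (cases "m \<le> 4")
    case True
    have "k = 1 \<or> k = 2 \<or> k = 3 \<or> k = 4" using less.prems by arith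
    moreover have "m = 0 \<or> m = 1 \<or> m = 2 \<or> m = 3 \<or> m = 4" using True by arith
    ultimately show ?thesis by (elim disjE) (simp_all add: A_vals)
  next
    case False
    have "k * A (m - 3) \<le> A (k + (m - 3))" using less.IH[of "m - 3"] less.prems False by simp
    moreover have "A m = 3 * A (m - 3)" using False by (simp add: A_ge5)
    moreover have "k + m - 3 = k + (m - 3)" using False by simp
    moreover have "A (k + m) = 3 * A (k + m - 3)" using False A_ge5[of "k+m"] by simp
    ultimately show ?thesis by simp
  qed
qed

lemma A_mult: "1 \<le> k \<Longrightarrow> k * A m \<le> A (k + m)"
proof (induction k rule: less_induct)
  case (less k)
  show ?case
  proof (cases "k \<le> 4")
    case True then show ?thesis using A_small_k less.prems by simp
  next
    case False
    have "(k - 3) * A m \<le> A (k - 3 + m)" using less.IH[of "k - 3"] False by simp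
    hence "3 * ((k - 3) * A m) \<le> 3 * A (k - 3 + m)" by simp
    moreover have "A (k + m) = 3 * A (k + m - 3)" using False A_ge5[of "k+m"] by simp
    moreover have "k + m - 3 = k - 3 + m" using False by simp
    moreover have "k * A m \<le> 3 * ((k - 3) * A m)"
    proof -
      have "k \<le> 3 * (k - 3)" using False by arith
      hence "k * A m \<le> (3 * (k - 3)) * A m" by (rule mult_le_mono1)
      thus ?thesis by (simp add: mult.assoc)
    qed
    ultimately show ?thesis by (metis le_trans)
  qed
qed

lemma A_3t1: "t \<ge> 1 \<Longrightarrow> A (3 * t + 1) = 4 * 3 ^ (t - 1)"
proof (induction t rule: less_induct)
  case (less t)
  show ?case
  proof (cases "t = 1")
    case True then show ?thesis by (simp add: A_vals)
  next
    case False
    have e: "3 * t + 1 - 3 = 3 * (t - 1) + 1" using less.prems by simp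
    have "A (3 * t + 1) = 3 * A (3 * t + 1 - 3)" using less.prems False A_ge5[of "3*t+1"] by simp
    then have "A (3 * t + 1) = 3 * A (3 * (t - 1) + 1)" unfolding e .
    also have "\<dots> = 3 * (4 * 3 ^ (t - 2))" using less False by simp
    also have "\<dots> = 4 * 3 ^ (t - 1)"
    proof -
      have "t - 1 = Suc (t - 2)" using False less.prems by arith
      then show ?thesis by simp
    qed
    finally show ?thesis .
  qed
qed

lemma partition_prod:
  "finite X \<Longrightarrow> (\<Prod>y\<in>f ` X. card {x\<in>X. f x = y}) \<le> A (card X)"
proof (induction "card X" arbitrary: X rule: less_induct)
  case less
  show ?case
  proof (cases "X = {}")
    case True then show ?thesis by (simp add: A_vals)
  next
    case False
    then obtain x0 where x0: "x0 \<in> X" by blast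
    define F where "F = {x\<in>X. f x = f x0}"
    define X' where "X' = X - F"
    have fin: "finite F" "finite X'" using less.prems by (auto simp: F_def X'_def)
    have FX: "F \<subseteq> X" by (auto simp: F_def)
    have "x0 \<in> F" using x0 by (simp add: F_def)
    then have "card F > 0" using fin(1) by (auto simp: card_gt_0_iff)
    then have cardF: "card F \<ge> 1" by simp
    have XU: "X = F \<union> X'" using FX by (auto simp: X'_def)
    have "F \<inter> X' = {}" by (auto simp: X'_def)
    then have cardX: "card X = card F + card X'" using XU fin card_Un_disjoint by metis
    have lt: "card X' < card X" using cardX cardF by simp
    have img: "f ` X = insert (f x0) (f ` X')" using x0 by (auto simp: X'_def F_def)
    have notin: "f x0 \<notin> f ` X'" by (auto simp: X'_def F_def)
    have fib: "\<And>y. y \<in> f ` X' \<Longrightarrow> {x\<in>X. f x = y} = {x\<in>X'. f x = y}"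
      by (auto simp: X'_def F_def)
    have "(\<Prod>y\<in>f ` X. card {x\<in>X. f x = y}) = card F * (\<Prod>y\<in>f ` X'. card {x\<in>X. f x = y})"
      unfolding img using notin fin by (simp add: F_def)
    also have "\<dots> = card F * (\<Prod>y\<in>f ` X'. card {x\<in>X'. f x = y})"
      using fib by (metis (no_types, lifting) prod.cong)
    also have "\<dots> \<le> card F * A (card X')" using less.hyps[OF lt fin(2)] by simp
    also have "\<dots> \<le> A (card F + card X')" using A_mult cardF by blast
    finally show ?thesis using cardX by simp
  qed
qed




inductive_set Wg :: "nat \<Rightarrow> (nat \<Rightarrow> nat \<Rightarrow> nat) \<Rightarrow> (nat \<Rightarrow> nat) set" for l p where
  Wid: "id \<in> Wg l p"
| Wgen: "j \<in> {1..l} \<Longrightarrow> p j \<in> Wg l p"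
| Winv: "j \<in> {1..l} \<Longrightarrow> inv (p j) \<in> Wg l p"
| Wcomp: "f \<in> Wg l p \<Longrightarrow> g \<in> Wg l p \<Longrightarrow> f \<circ> g \<in> Wg l p"

definition orb :: "nat \<Rightarrow> (nat \<Rightarrow> nat \<Rightarrow> nat) \<Rightarrow> nat \<Rightarrow> nat set" where
  "orb l p x = {w x | w. w \<in> Wg l p}"

definition rep :: "nat \<Rightarrow> (nat \<Rightarrow> nat \<Rightarrow> nat) \<Rightarrow> nat \<Rightarrow> nat" where
  "rep l p x = Min (orb l p x)"

definition hh :: "nat \<Rightarrow> (nat \<Rightarrow> nat \<Rightarrow> nat) \<Rightarrow> nat \<Rightarrow> nat \<Rightarrow> nat" where
  "hh l p x = (SOME w. w \<in> Wg l p \<and> w (rep l p x) = x)"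

definition enc :: "nat \<Rightarrow> nat \<Rightarrow> (nat \<Rightarrow> nat \<Rightarrow> nat) \<Rightarrow> ((nat \<Rightarrow> nat) \<times> (nat \<Rightarrow> nat \<Rightarrow> nat) \<times> (nat \<times> nat \<Rightarrow> nat))" where
  "enc l n p = (restrict (rep l p) {..<n}, restrict (hh l p) {..<n},
                 restrict (\<lambda>(j, y). p j y) ({1..l} \<times> rep l p ` {..<n}))"

definition Encs :: "nat \<Rightarrow> nat \<Rightarrow> ((nat \<Rightarrow> nat) \<times> (nat \<Rightarrow> nat \<Rightarrow> nat) \<times> (nat \<times> nat \<Rightarrow> nat)) set" where
  "Encs l n = (SIGMA r : ({..<n} \<rightarrow>\<^sub>E {..<n}). ({..<n} \<rightarrow>\<^sub>E {f. f permutes {..<n}}) \<times>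
     (\<Pi>\<^sub>E z \<in> {1..l} \<times> r ` {..<n}. {x \<in> {..<n}. r x = snd z}))"

context
  fixes l n p assumes P: "p \<in> comm_tuples l n"
begin

lemma P_perm: "j \<in> {1..l} \<Longrightarrow> p j permutes {..<n}"
  using P by (simp add: comm_tuples_def)

lemma P_comm: "j \<in> {1..l} \<Longrightarrow> k \<in> {1..l} \<Longrightarrow> p j \<circ> p k = p k \<circ> p j"
  using P by (simp add: comm_tuples_def)

lemma P_id: "j \<notin> {1..l} \<Longrightarrow> p j = id"
  using P by (simp add: comm_tuples_def)

lemma W_perm: "w \<in> Wg l p \<Longrightarrow> w permutes {..<n}"
proof (induction rule: Wg.induct)
  case Wid then show ?case by (rule permutes_id)
next
  case (Wgen j) then show ?case by (rule P_perm)
next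
  case (Winv j) then show ?case using P_perm permutes_inv by blast
next
  case (Wcomp f g) then show ?case using permutes_compose by blast
qed

lemma W_comm: "w \<in> Wg l p \<Longrightarrow> j \<in> {1..l} \<Longrightarrow> p j \<circ> w = w \<circ> p j"
proof (induction rule: Wg.induct)
  case Wid then show ?case by simp
next
  case (Wgen k) then show ?case using P_comm by blast
next
  case (Winv k)
  have q: "p k permutes {..<n}" using Winv P_perm by blast
  have c: "p j \<circ> p k = p k \<circ> p j" using Winv P_comm by blast
  show ?case
  proof
    fix x
    define y where "y = inv (p k) x"
    have xy: "x = p k y" using q by (simp add: y_def permutes_inverses)
    have "inv (p k) (p j x) = inv (p k) (p k (p j y))" using c xy by (metis comp_apply)
    also have "\<dots> = p j y" using q by (simp add: permutes_inverses)
    finally show "(p j \<circ> inv (p k)) x = (inv (p k) \<circ> p j) x" by (simp add: y_def)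
  qed
next
  case (Wcomp f g)
  then show ?case by (metis comp_assoc)
qed

lemma W_inv: "w \<in> Wg l p \<Longrightarrow> inv w \<in> Wg l p"
proof (induction rule: Wg.induct)
  case Wid then show ?case using Wg.Wid inv_id by metis
next
  case (Wgen j) then show ?case by (rule Wg.Winv)
next
  case (Winv j)
  have "inv (inv (p j)) = p j" using Winv P_perm permutes_bij inv_inv_eq by blast
  then show ?case using Winv Wg.Wgen by simp
next
  case (Wcomp f g)
  have "bij f" "bij g" using Wcomp W_perm permutes_bij by blast+
  then have e: "inv (f \<circ> g) = inv g \<circ> inv f" by (simp add: o_inv_distrib)
  have "inv g \<circ> inv f \<in> Wg l p" by (rule Wg.Wcomp[OF Wcomp.IH(2) Wcomp.IH(1)])
  then show ?case by (simp only: e)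
qed

lemma orb_sub: "x < n \<Longrightarrow> orb l p x \<subseteq> {..<n}"
  unfolding orb_def using W_perm permutes_in_image by fastforce

lemma orb_fin: "x < n \<Longrightarrow> finite (orb l p x)"
  using orb_sub finite_subset by blast

lemma orb_self: "x \<in> orb l p x"
  unfolding orb_def using Wg.Wid by (metis (mono_tags) id_apply mem_Collect_eq)

lemma orb_trans: "y \<in> orb l p x \<Longrightarrow> z \<in> orb l p y \<Longrightarrow> z \<in> orb l p x"
  unfolding orb_def using Wg.Wcomp by (smt (verit, best) comp_apply mem_Collect_eq)

lemma orb_sym: "y \<in> orb l p x \<Longrightarrow> x \<in> orb l p y"
proof -
  assume "y \<in> orb l p x"
  then obtain w where w: "w \<in> Wg l p" "y = w x" unfolding orb_def by blast
  have "inv w y = x" using w W_perm permutes_inverses by metis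
  then show ?thesis unfolding orb_def using W_inv w by blast
qed

lemma orb_eq: "y \<in> orb l p x \<Longrightarrow> orb l p y = orb l p x"
  using orb_trans orb_sym by blast

lemma rep_in: "x < n \<Longrightarrow> rep l p x \<in> orb l p x"
  unfolding rep_def using orb_fin orb_self Min_in by blast

lemma rep_lt: "x < n \<Longrightarrow> rep l p x < n"
  using rep_in orb_sub by blast

lemma rep_eq: "y \<in> orb l p x \<Longrightarrow> rep l p y = rep l p x"
  unfolding rep_def using orb_eq by simp

lemma p_orb: "j \<in> {1..l} \<Longrightarrow> p j y \<in> orb l p y"
  unfolding orb_def using Wg.Wgen by blast

lemma hh_prop: "x < n \<Longrightarrow> hh l p x \<in> Wg l p \<and> hh l p x (rep l p x) = x"
proof -
  assume "x < n"
  then have "x \<in> orb l p (rep l p x)" using rep_in orb_sym by blast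
  then obtain w where w: "w \<in> Wg l p" "x = w (rep l p x)" unfolding orb_def by blast
  then have "\<exists>w. w \<in> Wg l p \<and> w (rep l p x) = x" by metis
  then show ?thesis unfolding hh_def by (rule someI_ex)
qed

lemma decode: "x < n \<Longrightarrow> j \<in> {1..l} \<Longrightarrow> p j x = hh l p x (p j (rep l p x))"
proof -
  assume x: "x < n" and j: "j \<in> {1..l}"
  have "p j x = p j (hh l p x (rep l p x))" using hh_prop x by simp
  also have "\<dots> = (p j \<circ> hh l p x) (rep l p x)" by simp
  also have "\<dots> = (hh l p x \<circ> p j) (rep l p x)" using W_comm hh_prop x j by metis
  finally show ?thesis by simp
qed

lemma enc_in: "enc l n p \<in> Encs l n"
proof -
  have r: "restrict (rep l p) {..<n} \<in> {..<n} \<rightarrow>\<^sub>E {..<n}" using rep_lt by auto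
  have h: "restrict (hh l p) {..<n} \<in> {..<n} \<rightarrow>\<^sub>E {f. f permutes {..<n}}"
    using hh_prop W_perm by auto
  have img: "restrict (rep l p) {..<n} ` {..<n} = rep l p ` {..<n}" by auto
  have v: "restrict (\<lambda>(j, y). p j y) ({1..l} \<times> rep l p ` {..<n}) \<in>
     (\<Pi>\<^sub>E z \<in> {1..l} \<times> rep l p ` {..<n}. {x \<in> {..<n}. restrict (rep l p) {..<n} x = snd z})"
    unfolding restrict_PiE_iff
  proof
    fix z assume z: "z \<in> {1..l} \<times> rep l p ` {..<n}"
    then obtain j x0 where zj: "z = (j, rep l p x0)" "j \<in> {1..l}" "x0 < n" by auto
    define y where "y = rep l p x0"
    have yl: "y < n" using zj rep_lt y_def by simp
    have py: "p j y < n" using P_perm[OF zj(2)] yl permutes_in_image by fastforce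
    have "rep l p (p j y) = rep l p y" using rep_eq p_orb zj(2) by blast
    also have "\<dots> = rep l p x0" unfolding y_def using rep_eq rep_in zj(3) by blast
    finally show "(case z of (j, y) \<Rightarrow> p j y) \<in> {x \<in> {..<n}. restrict (rep l p) {..<n} x = snd z}"
      using py y_def zj(1) by simp
  qed
  show ?thesis unfolding enc_def Encs_def using r h v img by simp
qed

end

lemma enc_inj: "inj_on (enc l n) (comm_tuples l n)"
proof (rule inj_onI)
  fix p q assume p: "p \<in> comm_tuples l n" and q: "q \<in> comm_tuples l n" and e: "enc l n p = enc l n q"
  have er: "\<And>x. x < n \<Longrightarrow> rep l p x = rep l q x" using e unfolding enc_def
    by (metis (no_types, lifting) lessThan_iff prod.inject restrict_apply')
  have eh: "\<And>x. x < n \<Longrightarrow> hh l p x = hh l q x" using e unfolding enc_def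
    by (metis (no_types, lifting) lessThan_iff prod.inject restrict_apply')
  have img: "rep l p ` {..<n} = rep l q ` {..<n}" using er by (auto intro!: image_cong)
  have ev: "restrict (\<lambda>(j, y). p j y) ({1..l} \<times> rep l p ` {..<n}) = restrict (\<lambda>(j, y). q j y) ({1..l} \<times> rep l p ` {..<n})"
    using e img unfolding enc_def by simp
  have "p j x = q j x" for j x
    proof (cases "j \<in> {1..l}")
      case False then show ?thesis using P_id p q by simp
    next
      case j: True
      show ?thesis
      proof (cases "x < n")
        case False
        then show ?thesis using P_perm[OF p j] P_perm[OF q j] by (simp add: permutes_def)
      next
        case x: True
        have "(j, rep l p x) \<in> {1..l} \<times> rep l p ` {..<n}" using j x by simp
        then have "p j (rep l p x) = q j (rep l p x)" using fun_cong[OF ev, of "(j, rep l p x)"] by simp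
        then show ?thesis using decode[OF p x j] decode[OF q x j] er[OF x] eh[OF x] by simp
      qed
    qed
  then show "p = q" by (intro ext)
qed

lemma finite_Encs: "finite (Encs l n)"
proof -
  have fR: "finite ({..<n} \<rightarrow>\<^sub>E {..<n})" by (rule finite_PiE) auto
  have fH: "finite ({..<n} \<rightarrow>\<^sub>E {f::nat\<Rightarrow>nat. f permutes {..<n}})"
    by (rule finite_PiE) (auto intro: finite_permutations)
  have fV: "finite (\<Pi>\<^sub>E z \<in> {1..l} \<times> r ` {..<n}. {x \<in> {..<n}. r x = snd z})" for r :: "nat \<Rightarrow> nat"
    by (rule finite_PiE) auto
  show ?thesis unfolding Encs_def
    using fR fH fV by (intro finite_SigmaI finite_cartesian_product) auto
qed

lemma finite_comm_tuples: "finite (comm_tuples l n)"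
proof -
  have "enc l n ` comm_tuples l n \<subseteq> Encs l n" using enc_in by blast
  then have "finite (enc l n ` comm_tuples l n)" using finite_Encs finite_subset by blast
  then show ?thesis using finite_imageD enc_inj by blast
qed

definition KK :: "nat \<Rightarrow> nat" where
  "KK n = card ({..<n} \<rightarrow>\<^sub>E {..<n}) * card ({..<n} \<rightarrow>\<^sub>E {f::nat\<Rightarrow>nat. f permutes {..<n}})"

lemma card_Encs: "card (Encs l n) \<le> KK n * A n ^ l"
proof -
  let ?R = "{..<n} \<rightarrow>\<^sub>E {..<n}"
  let ?H = "{..<n} \<rightarrow>\<^sub>E {f::nat\<Rightarrow>nat. f permutes {..<n}}"
  let ?V = "\<lambda>r. (\<Pi>\<^sub>E z \<in> {1..l} \<times> r ` {..<n}. {x \<in> {..<n}. r x = snd z})"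
  have fH: "finite ?H" by (intro finite_PiE finite_permutations) auto
  have fR: "finite ?R" by (intro finite_PiE) auto
  have cV: "card (?V r) \<le> A n ^ l" for r :: "nat \<Rightarrow> nat"
  proof -
    have "card (?V r) = (\<Prod>z \<in> {1..l} \<times> r ` {..<n}. card {x \<in> {..<n}. r x = snd z})"
      by (rule card_PiE) auto
    also have "\<dots> = (\<Prod>j \<in> {1..l}. \<Prod>y \<in> r ` {..<n}. card {x \<in> {..<n}. r x = y})"
      by (subst prod.cartesian_product) (simp add: case_prod_beta)
    also have "\<dots> = (\<Prod>y \<in> r ` {..<n}. card {x \<in> {..<n}. r x = y}) ^ l" by simp
    also have "\<dots> \<le> A n ^ l"
      using partition_prod[of "{..<n}" r] by (simp add: power_mono)
    finally show ?thesis .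
  qed
  have "card (Encs l n) = (\<Sum>r \<in> ?R. card (?H \<times> ?V r))"
    unfolding Encs_def using fH fR
    by (intro card_SigmaI) (auto intro!: finite_cartesian_product finite_PiE)
  also have "\<dots> = (\<Sum>r \<in> ?R. card ?H * card (?V r))" by (simp add: card_cartesian_product)
  also have "\<dots> \<le> (\<Sum>r \<in> ?R. card ?H * A n ^ l)" by (intro sum_mono mult_le_mono2 cV)
  also have "\<dots> = KK n * A n ^ l" by (simp add: KK_def)
  finally show ?thesis .
qed

lemma upper: "card (comm_tuples l n) \<le> KK n * A n ^ l"
proof -
  have "card (comm_tuples l n) \<le> card (Encs l n)"
    using enc_inj enc_in finite_Encs by (intro card_inj_on_le) auto
  then show ?thesis using card_Encs le_trans by blast
qed




lemma mod_shift_back: "x < (k::nat) \<Longrightarrow> ((x + a) mod k + (k - a mod k)) mod k = x"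
proof -
  assume x: "x < k"
  then have k: "k > 0" by simp
  have m: "a mod k < k" using k by simp
  have d: "k * (a div k) + a mod k = a" by (rule mult_div_mod_eq)
  have e1: "a + (k - a mod k) = k * (a div k) + k" using m d by linarith
  have e: "x + a + (k - a mod k) = x + k * (a div k + 1)" using e1 by simp
  have "((x + a) mod k + (k - a mod k)) mod k = (x + a + (k - a mod k)) mod k"
    by (simp add: mod_add_left_eq)
  also have "\<dots> = (x + k * (a div k + 1)) mod k" by (simp only: e)
  also have "\<dots> = x mod k" by (rule mod_mult_self2)
  also have "\<dots> = x" using x by simp
  finally show ?thesis .
qed

lemma shift_perm: "0 < k \<Longrightarrow> (\<lambda>x. if x < k then (x + a) mod k else x) permutes {..<(k::nat)}"
proof -
  assume k: "0 < k"
  let ?f = "\<lambda>x. if x < k then (x + a) mod k else x"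
  have inj: "inj_on ?f {..<k}"
  proof (rule inj_onI)
    fix x y assume x: "x \<in> {..<k}" and y: "y \<in> {..<k}" and e: "?f x = ?f y"
    then have xy: "(x + a) mod k = (y + a) mod k" by simp
    have "x = ((x + a) mod k + (k - a mod k)) mod k" using mod_shift_back[of x k a] x by simp
    also have "\<dots> = ((y + a) mod k + (k - a mod k)) mod k" by (simp only: xy)
    also have "\<dots> = y" using mod_shift_back[of y k a] y by simp
    finally show "x = y" .
  qed
  have sub: "?f ` {..<k} \<subseteq> {..<k}" using k by auto
  have "?f ` {..<k} = {..<k}" using endo_inj_surj[OF _ sub inj] by simp
  then have "bij_betw ?f {..<k} {..<k}" using inj by (simp add: bij_betw_def)
  then show ?thesis by (rule bij_imp_permutes) simp
qed

definition sh :: "nat \<Rightarrow> nat \<Rightarrow> (nat \<Rightarrow> nat) \<Rightarrow> nat \<Rightarrow> nat \<Rightarrow> nat" where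
  "sh l k e = (\<lambda>j. if j \<in> {1..l} then (\<lambda>x. if x < k then (x + e j) mod k else x) else id)"

lemma sh_in: "0 < k \<Longrightarrow> sh l k e \<in> comm_tuples l k"
proof -
  assume k: "0 < k"
  have c: "(\<lambda>x. if x < k then (x + a) mod k else x) \<circ> (\<lambda>x. if x < k then (x + b) mod k else x)
      = (\<lambda>x. if x < k then (x + b) mod k else x) \<circ> (\<lambda>x. if x < k then (x + a) mod k else x)" for a b
  proof
    fix x
    show "((\<lambda>x. if x < k then (x + a) mod k else x) \<circ> (\<lambda>x. if x < k then (x + b) mod k else x)) x
      = ((\<lambda>x. if x < k then (x + b) mod k else x) \<circ> (\<lambda>x. if x < k then (x + a) mod k else x)) x"
    proof (cases "x < k")
      case True
      have "(a + (b + x) mod k) mod k = (b + (a + x) mod k) mod k"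
      proof -
        have "(a + (b + x) mod k) mod k = (a + (b + x)) mod k" by (rule mod_add_right_eq)
        also have "\<dots> = (b + (a + x)) mod k" by (simp add: add.left_commute)
        also have "\<dots> = (b + (a + x) mod k) mod k" by (rule mod_add_right_eq[symmetric])
        finally show ?thesis .
      qed
      moreover have "((x + b) mod k + a) mod k = ((x + a) mod k + b) mod k"
      proof -
        have "((x + b) mod k + a) mod k = (x + b + a) mod k" by (rule mod_add_left_eq)
        also have "\<dots> = (x + a + b) mod k" by (simp add: add_ac)
        also have "\<dots> = ((x + a) mod k + b) mod k" by (rule mod_add_left_eq[symmetric])
        finally show ?thesis .
      qed
      ultimately show ?thesis using True k by simp
    next
      case False then show ?thesis by simp
    qed
  qed
  have perm: "sh l k e j permutes {..<k}" if "j \<in> {1..l}" for j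
    using that shift_perm[OF k] by (simp add: sh_def)
  have idj: "sh l k e j = id" if "j \<notin> {1..l}" for j
    unfolding sh_def by (rule if_not_P[OF that])
  have comm: "sh l k e j \<circ> sh l k e i = sh l k e i \<circ> sh l k e j" if "j \<in> {1..l}" "i \<in> {1..l}" for i j
    using that c by (simp add: sh_def)
  show ?thesis unfolding comm_tuples_def using perm idj comm by blast
qed

lemma lower_shift: "0 < k \<Longrightarrow> k ^ l \<le> card (comm_tuples l k)"
proof -
  assume k: "0 < k"
  let ?E = "{1..l} \<rightarrow>\<^sub>E {..<k}"
  have cE: "card ?E = k ^ l" by (simp add: card_PiE)
  have inj: "inj_on (sh l k) ?E"
  proof (rule inj_onI)
    fix e1 e2 assume e1: "e1 \<in> ?E" and e2: "e2 \<in> ?E" and e: "sh l k e1 = sh l k e2"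
    show "e1 = e2"
    proof
      fix j
      show "e1 j = e2 j"
      proof (cases "j \<in> {1..l}")
        case True
        have ee: "sh l k e1 j 0 = sh l k e2 j 0" using e by simp
        have l1: "e1 j < k" using True e1 by (auto simp: PiE_iff)
        have l2: "e2 j < k" using True e2 by (auto simp: PiE_iff)
        have s1: "sh l k e1 j 0 = e1 j" using True k l1 by (simp add: sh_def)
        have s2: "sh l k e2 j 0 = e2 j" using True k l2 by (simp add: sh_def)
        show ?thesis using ee s1 s2 by simp
      next
        case False
        have "e1 j = undefined" by (rule PiE_arb[OF e1 False])
        moreover have "e2 j = undefined" by (rule PiE_arb[OF e2 False])
        ultimately show ?thesis by simp
      qed
    qed
  qed
  have sub: "sh l k ` ?E \<subseteq> comm_tuples l k" using sh_in[OF k] by blast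
  have "card ?E \<le> card (comm_tuples l k)"
    by (rule card_inj_on_le[OF inj sub finite_comm_tuples])
  then show ?thesis using cE by simp
qed

definition cat :: "nat \<Rightarrow> nat \<Rightarrow> nat \<Rightarrow> (nat \<Rightarrow> nat \<Rightarrow> nat) \<Rightarrow> (nat \<Rightarrow> nat \<Rightarrow> nat) \<Rightarrow> nat \<Rightarrow> nat \<Rightarrow> nat" where
  "cat l a b p q = (\<lambda>j. if j \<in> {1..l} then
     (\<lambda>x. if x < a then p j x else if x < a + b then a + q j (x - a) else x) else id)"

lemma perm_lt: "f permutes {..<(a::nat)} \<Longrightarrow> x < a \<Longrightarrow> f x < a"
  using permutes_in_image by fastforce

lemma perm_ge: "f permutes {..<(a::nat)} \<Longrightarrow> \<not> x < a \<Longrightarrow> f x = x"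
  by (simp add: permutes_def)

lemma cat_perm:
  assumes p: "f permutes {..<a}" and q: "g permutes {..<(b::nat)}"
  shows "(\<lambda>x. if x < a then f x else if x < a + b then a + g (x - a) else x) permutes {..<a+b}"
proof -
  let ?h = "\<lambda>x. if x < a then f x else if x < a + b then a + g (x - a) else x"
  have sub: "?h ` {..<a+b} \<subseteq> {..<a+b}" using perm_lt[OF p] perm_lt[OF q] by fastforce
  have inj: "inj_on ?h {..<a+b}"
  proof (rule inj_onI)
    fix x y assume x: "x \<in> {..<a+b}" and y: "y \<in> {..<a+b}" and e: "?h x = ?h y"
    have injf: "inj f" using p permutes_inj by blast
    have injg: "inj g" using q permutes_inj by blast
    show "x = y"
    proof (cases "x < a")
      case True
      show ?thesis
      proof (cases "y < a")
        case True then show ?thesis using \<open>x < a\<close> e injf by (simp add: inj_eq)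
      next
        case False then show ?thesis using \<open>x < a\<close> e y perm_lt[OF p \<open>x < a\<close>] by simp
      qed
    next
      case False
      show ?thesis
      proof (cases "y < a")
        case True then show ?thesis using \<open>\<not> x < a\<close> e x perm_lt[OF p True] by simp
      next
        case False
        then have "g (x - a) = g (y - a)" using \<open>\<not> x < a\<close> e x y by simp
        then have "x - a = y - a" using injg by (simp add: inj_eq)
        then show ?thesis using False \<open>\<not> x < a\<close> by simp
      qed
    qed
  qed
  have "?h ` {..<a+b} = {..<a+b}" using endo_inj_surj[OF _ sub inj] by simp
  then have "bij_betw ?h {..<a+b} {..<a+b}" using inj by (simp add: bij_betw_def)
  then show ?thesis by (rule bij_imp_permutes) simp
qed

lemma cat_in:
  assumes p: "p \<in> comm_tuples l a" and q: "q \<in> comm_tuples l b"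
  shows "cat l a b p q \<in> comm_tuples l (a + b)"
proof -
  have pp: "\<And>j. j \<in> {1..l} \<Longrightarrow> p j permutes {..<a}" using p by (simp add: comm_tuples_def)
  have qq: "\<And>j. j \<in> {1..l} \<Longrightarrow> q j permutes {..<b}" using q by (simp add: comm_tuples_def)
  have pc: "p j (p k x) = p k (p j x)" if "j \<in> {1..l}" "k \<in> {1..l}" for j k x
  proof -
    have "p j \<circ> p k = p k \<circ> p j" using p that by (simp add: comm_tuples_def)
    then show ?thesis by (metis comp_apply)
  qed
  have qc: "q j (q k x) = q k (q j x)" if "j \<in> {1..l}" "k \<in> {1..l}" for j k x
  proof -
    have "q j \<circ> q k = q k \<circ> q j" using q that by (simp add: comm_tuples_def)
    then show ?thesis by (metis comp_apply)
  qed
  have c1: "cat l a b p q j x = p j x" if "j \<in> {1..l}" "x < a" for j x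
    using that by (simp add: cat_def)
  have c2: "cat l a b p q j x = a + q j (x - a)" if "j \<in> {1..l}" "\<not> x < a" "x < a + b" for j x
    using that by (simp add: cat_def)
  have c3: "cat l a b p q j x = x" if "\<not> x < a + b" for j x
    using that by (simp add: cat_def)
  have c4: "cat l a b p q j = id" if "j \<notin> {1..l}" for j
    unfolding cat_def by (rule if_not_P[OF that])
  have comm: "cat l a b p q j \<circ> cat l a b p q k = cat l a b p q k \<circ> cat l a b p q j"
    if j: "j \<in> {1..l}" and k: "k \<in> {1..l}" for j k
  proof
    fix x
    show "(cat l a b p q j \<circ> cat l a b p q k) x = (cat l a b p q k \<circ> cat l a b p q j) x"
    proof (cases "x < a")
      case True
      have "cat l a b p q j (cat l a b p q k x) = p j (p k x)"
        using c1[OF k True] c1[OF j perm_lt[OF pp[OF k] True]] by simp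
      moreover have "cat l a b p q k (cat l a b p q j x) = p k (p j x)"
        using c1[OF j True] c1[OF k perm_lt[OF pp[OF j] True]] by simp
      ultimately show ?thesis using pc[OF j k] by simp
    next
      case False
      show ?thesis
      proof (cases "x < a + b")
        case True
        have xb: "x - a < b" using True False by simp
        have nj: "\<not> a + q j (x - a) < a" "a + q j (x - a) < a + b" using perm_lt[OF qq[OF j] xb] by auto
        have nk: "\<not> a + q k (x - a) < a" "a + q k (x - a) < a + b" using perm_lt[OF qq[OF k] xb] by auto
        have "cat l a b p q j (cat l a b p q k x) = a + q j (q k (x - a))"
          using c2[OF k False True] c2[OF j nk] by simp
        moreover have "cat l a b p q k (cat l a b p q j x) = a + q k (q j (x - a))"
          using c2[OF j False True] c2[OF k nj] by simp
        ultimately show ?thesis using qc[OF j k] by simp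
      next
        case F2: False
        then show ?thesis using c3 by simp
      qed
    qed
  qed
  have perm: "cat l a b p q j permutes {..<a + b}" if j: "j \<in> {1..l}" for j
  proof -
    have "cat l a b p q j = (\<lambda>x. if x < a then p j x else if x < a + b then a + q j (x - a) else x)"
      using j by (simp add: cat_def)
    then show ?thesis using cat_perm[OF pp[OF j] qq[OF j]] by simp
  qed
  show ?thesis unfolding comm_tuples_def
    using comm perm c4 by blast
qed

lemma super: "card (comm_tuples l a) * card (comm_tuples l b) \<le> card (comm_tuples l (a + b))"
proof -
  have inj: "inj_on (\<lambda>(p, q). cat l a b p q) (comm_tuples l a \<times> comm_tuples l b)"
  proof (rule inj_onI, clarify)
    fix p q p' q'
    assume p: "p \<in> comm_tuples l a" and q: "q \<in> comm_tuples l b"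
      and p': "p' \<in> comm_tuples l a" and q': "q' \<in> comm_tuples l b"
      and e: "cat l a b p q = cat l a b p' q'"
    have pp: "\<And>j. j \<in> {1..l} \<Longrightarrow> p j permutes {..<a}" using p by (simp add: comm_tuples_def)
    have qq: "\<And>j. j \<in> {1..l} \<Longrightarrow> q j permutes {..<b}" using q by (simp add: comm_tuples_def)
    have pp': "\<And>j. j \<in> {1..l} \<Longrightarrow> p' j permutes {..<a}" using p' by (simp add: comm_tuples_def)
    have qq': "\<And>j. j \<in> {1..l} \<Longrightarrow> q' j permutes {..<b}" using q' by (simp add: comm_tuples_def)
    have "p j x = p' j x \<and> q j x = q' j x" for j x
    proof (cases "j \<in> {1..l}")
      case False then show ?thesis using p q p' q' by (simp add: comm_tuples_def)
    next
      case j: True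
      have 1: "p j x = p' j x"
      proof (cases "x < a")
        case True then show ?thesis using fun_cong[OF fun_cong[OF e, of j], of x] j by (simp add: cat_def)
      next
        case False then show ?thesis using perm_ge[OF pp[OF j]] perm_ge[OF pp'[OF j]] by simp
      qed
      have 2: "q j x = q' j x"
      proof (cases "x < b")
        case True then show ?thesis using fun_cong[OF fun_cong[OF e, of j], of "a + x"] j by (simp add: cat_def)
      next
        case False then show ?thesis using perm_ge[OF qq[OF j]] perm_ge[OF qq'[OF j]] by simp
      qed
      show ?thesis using 1 2 by simp
    qed
    then show "p = p' \<and> q = q'" by (auto intro!: ext)
  qed
  have sub: "(\<lambda>(p, q). cat l a b p q) ` (comm_tuples l a \<times> comm_tuples l b) \<subseteq> comm_tuples l (a + b)"
    using cat_in by auto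
  have "card (comm_tuples l a \<times> comm_tuples l b) \<le> card (comm_tuples l (a + b))"
    by (rule card_inj_on_le[OF inj sub finite_comm_tuples])
  then show ?thesis by (simp add: card_cartesian_product)
qed

lemma lower3: "t \<ge> 1 \<Longrightarrow> (3::nat) ^ (t * l) \<le> card (comm_tuples l (3 * t))"
proof (induction t rule: dec_induct)
  case base then show ?case using lower_shift[of 3 l] by simp
next
  case (step t)
  have "(3::nat) ^ (Suc t * l) = 3 ^ (t * l) * 3 ^ l" by (simp add: power_add)
  also have "\<dots> \<le> card (comm_tuples l (3 * t)) * card (comm_tuples l 3)"
    using step.IH lower_shift[of 3 l] by (intro mult_le_mono) auto
  also have "\<dots> \<le> card (comm_tuples l (3 * t + 3))" by (rule super)
  also have "3 * t + 3 = 3 * Suc t" by simp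
  finally show ?case .
qed

lemma lower32: "t \<ge> 1 \<Longrightarrow> (2::nat) ^ l * 3 ^ (t * l) \<le> card (comm_tuples l (3 * t + 2))"
proof -
  assume t: "t \<ge> 1"
  have "(2::nat) ^ l * 3 ^ (t * l) \<le> card (comm_tuples l 2) * card (comm_tuples l (3 * t))"
    using lower3[OF t] lower_shift[of 2 l] by (intro mult_le_mono) auto
  also have "\<dots> \<le> card (comm_tuples l (2 + 3 * t))" by (rule super)
  finally show ?thesis by (simp add: add.commute)
qed




lemma neg_eventually:
  assumes t: "t \<ge> 1"
  shows "\<exists>L0. \<forall>l\<ge>L0. Delta l (3 * t + 1) < 0"
proof -
  define n where "n = 3 * t + 1"
  define K where "K = real (KK n)"
  define F0 where "F0 = (fact (n - 1) :: real)"
  define F1 where "F1 = (fact n :: real)"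
  define F2 where "F2 = (fact (n + 1) :: real)"
  define \<beta> where "\<beta> = (9::real) ^ (t - 1)"
  have F0p: "F0 > 0" and F1p: "F1 > 0" and F2p: "F2 > 0" by (simp_all add: F0_def F1_def F2_def)
  have \<beta>p: "\<beta> > 0" by (simp add: \<beta>_def)
  define C where "C = K^2 * F0 * F2 / F1^2"
  have C0: "C \<ge> 0" using F0p F1p F2p by (simp add: C_def)
  obtain L0 where L0: "(8/9::real) ^ L0 < 1 / (C + 1)"
    using real_arch_pow_inv[of "1 / (C + 1)" "8/9"] C0 by auto
  have "Delta l n < 0" if l: "l \<ge> L0" for l
  proof -
    define a where "a = real (card (comm_tuples l n))"
    define b where "b = real (card (comm_tuples l (n - 1)))"
    define d where "d = real (card (comm_tuples l (n + 1)))"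
    have pl: "(8/9::real) ^ l \<le> (8/9) ^ L0" using l by (intro power_decreasing) auto
    have "(8/9::real) ^ l \<le> 1 / (C + 1)" using pl L0 by linarith
    then have "C * (8/9::real) ^ l \<le> C * (1 / (C + 1))" using C0 by (rule mult_left_mono)
    also have "\<dots> < 1" using C0 by (simp add: field_simps)
    finally have key: "C * (8/9::real) ^ l < 1" .
    have e89: "(8/9::real) ^ l * 18 ^ l = 16 ^ l"
      by (simp add: power_mult_distrib[symmetric])
    have "C * (8/9::real) ^ l * 18 ^ l < 18 ^ l" using key by simp
    then have k2: "C * 16 ^ l < (18::real) ^ l" using e89 by (simp add: mult.assoc)
    have "C * 16 ^ l * F1^2 < (18::real) ^ l * F1^2" using k2 F1p by simp
    moreover have "C * F1^2 = K^2 * F0 * F2" using F1p by (simp add: C_def)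
    ultimately have k3: "K^2 * F0 * F2 * 16 ^ l < (18::real) ^ l * F1^2"
      by (metis mult.commute mult.left_commute)
    have k4: "K^2 * 16 ^ l * \<beta> ^ l * F0 * F2 < 18 ^ l * \<beta> ^ l * F1^2"
    proof -
      have "(K^2 * F0 * F2 * 16 ^ l) * \<beta> ^ l < ((18::real) ^ l * F1^2) * \<beta> ^ l"
        using k3 \<beta>p by simp
      then show ?thesis by (simp add: algebra_simps)
    qed
    have ua: "a \<le> K * (4 * 3 ^ (t - 1)) ^ l"
    proof -
      have "card (comm_tuples l n) \<le> KK n * A n ^ l" by (rule upper)
      moreover have "A n = 4 * 3 ^ (t - 1)" unfolding n_def by (rule A_3t1[OF t])
      ultimately have "card (comm_tuples l n) \<le> KK n * (4 * 3 ^ (t - 1)) ^ l" by simp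
      then have "real (card (comm_tuples l n)) \<le> real (KK n * (4 * 3 ^ (t - 1)) ^ l)" by (rule of_nat_mono)
      then show ?thesis unfolding a_def K_def by simp
    qed
    have a0: "a \<ge> 0" by (simp add: a_def)
    have s9: "(3::real) ^ (t - 1) * 3 ^ (t - 1) = (3 * 3) ^ (t - 1)" by (rule power_mult_distrib[symmetric])
    have sq: "((4::real) * 3 ^ (t - 1)) ^ 2 = 16 * \<beta>"
    proof -
      have "((4::real) * 3 ^ (t - 1)) ^ 2 = 16 * (3 ^ (t - 1) * 3 ^ (t - 1))"
        by (simp add: power2_eq_square algebra_simps)
      then show ?thesis using s9 by (simp add: \<beta>_def)
    qed
    have ua2: "a^2 \<le> K^2 * 16 ^ l * \<beta> ^ l"
    proof -
      have "a^2 \<le> (K * (4 * 3 ^ (t - 1)) ^ l)^2" using ua a0 by (intro power_mono) auto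
      also have "\<dots> = K^2 * (((4::real) * 3 ^ (t - 1)) ^ l) ^ 2"
        by (simp add: power_mult_distrib)
      also have "\<dots> = K^2 * (((4::real) * 3 ^ (t - 1)) ^ 2) ^ l"
        by (simp only: power_mult[symmetric] mult.commute)
      also have "\<dots> = K^2 * 16 ^ l * \<beta> ^ l" using sq by (simp add: power_mult_distrib)
      finally show ?thesis .
    qed
    have lb: "(3 ^ t) ^ l \<le> b"
    proof -
      have "3 ^ (t * l) \<le> card (comm_tuples l (3 * t))" by (rule lower3[OF t])
      moreover have "n - 1 = 3 * t" by (simp add: n_def)
      ultimately have "3 ^ (t * l) \<le> card (comm_tuples l (n - 1))" by simp
      then have "real (3 ^ (t * l)) \<le> b" unfolding b_def by (rule of_nat_mono)
      then show ?thesis by (simp add: power_mult)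
    qed
    have ld: "2 ^ l * (3 ^ t) ^ l \<le> d"
    proof -
      have "2 ^ l * 3 ^ (t * l) \<le> card (comm_tuples l (3 * t + 2))" by (rule lower32[OF t])
      moreover have "n + 1 = 3 * t + 2" by (simp add: n_def)
      ultimately have "2 ^ l * 3 ^ (t * l) \<le> card (comm_tuples l (n + 1))" by simp
      then have "real (2 ^ l * 3 ^ (t * l)) \<le> d" unfolding d_def by (rule of_nat_mono)
      then show ?thesis by (simp add: power_mult)
    qed
    have e18: "(3 ^ t) ^ l * (2 ^ l * (3 ^ t) ^ l) = (18::real) ^ l * \<beta> ^ l"
    proof -
      have s3: "(3::real) ^ t * 3 ^ t = (3 * 3) ^ t" by (rule power_mult_distrib[symmetric])
      have s4: "(9::real) ^ t = 9 * 9 ^ (t - 1)" using t by (cases t) auto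
      have "(3::real) ^ t * 3 ^ t = 9 * \<beta>" using s3 s4 by (simp add: \<beta>_def)
      then have h9: "(3::real) ^ t * 3 ^ t = 9 * \<beta>" .
      have "(3::real) ^ t * (2 * 3 ^ t) = 2 * ((3::real) ^ t * 3 ^ t)" by (rule mult.left_commute)
      also have "\<dots> = 18 * \<beta>" unfolding h9 by simp
      finally have "(3::real) ^ t * (2 * 3 ^ t) = 18 * \<beta>" .
      then have e: "((3::real) ^ t * (2 * 3 ^ t)) ^ l = (18 * \<beta>) ^ l" by (rule arg_cong[where f="\<lambda>x. x ^ l"])
      have "((3::real) ^ t) ^ l * (2 ^ l * (3 ^ t) ^ l) = ((3::real) ^ t * (2 * 3 ^ t)) ^ l"
        by (simp only: power_mult_distrib)
      also have "\<dots> = (18 * \<beta>) ^ l" by (rule e)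
      also have "\<dots> = 18 ^ l * \<beta> ^ l" by (rule power_mult_distrib)
      finally show ?thesis .
    qed
    have lbd: "18 ^ l * \<beta> ^ l \<le> b * d"
    proof -
      have "(3 ^ t) ^ l * (2 ^ l * (3 ^ t) ^ l) \<le> b * d"
        using lb ld by (intro mult_mono) (auto simp: b_def)
      then show ?thesis using e18 by simp
    qed
    have main: "a^2 * F0 * F2 < b * d * F1^2"
    proof -
      have "a^2 * F0 * F2 \<le> K^2 * 16 ^ l * \<beta> ^ l * F0 * F2"
        using ua2 F0p F2p by (intro mult_right_mono) auto
      also have "\<dots> < 18 ^ l * \<beta> ^ l * F1^2" by (rule k4)
      also have "\<dots> \<le> b * d * F1^2" using lbd F1p by (intro mult_right_mono) auto
      finally show ?thesis .
    qed
    have "Delta l n = (a / F1)^2 - (b / F0) * (d / F2)"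
      by (simp add: Delta_def N_comm_def a_def b_def d_def F0_def F1_def F2_def)
    also have "\<dots> = (a^2 * F0 * F2 - b * d * F1^2) / (F1^2 * F0 * F2)"
      using F0p F1p F2p by (simp add: field_simps power2_eq_square)
    also have "\<dots> < 0" using main F0p F1p F2p by (intro divide_neg_pos) auto
    finally show ?thesis .
  qed
  then show ?thesis unfolding n_def by blast
qed

theorem corollary1p6:
  fixes n0 :: "nat \<Rightarrow> int"
  assumes "\<forall>l\<in>S_eventually_pos. \<forall>n::nat. n \<ge> 1 \<and> int n \<ge> n0 l \<longrightarrow> Delta l n > 0"
    and "infinite S_eventually_pos"
  shows "\<forall>B::int. \<exists>l\<in>S_eventually_pos. n0 l > B"
proof (rule ccontr)
  assume "\<not> (\<forall>B::int. \<exists>l\<in>S_eventually_pos. n0 l > B)"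
  then obtain B :: int where B: "\<forall>l\<in>S_eventually_pos. n0 l \<le> B" by (auto simp: not_less)
  define t where "t = nat B + 1"
  have t: "t \<ge> 1" by (simp add: t_def)
  obtain L0 where L0: "\<forall>l\<ge>L0. Delta l (3 * t + 1) < 0" using neg_eventually[OF t] by blast
  have "\<not> (\<forall>l\<in>S_eventually_pos. l \<le> L0)"
    using assms(2) finite_nat_set_iff_bounded_le by blast
  then obtain l where l: "l \<ge> L0" "l \<in> S_eventually_pos" by (auto simp: not_le intro: less_imp_le)
  have b1: "n0 l \<le> B" using B l(2) by blast
  have b2: "B \<le> int (nat B)" by simp
  have b3: "int (nat B) \<le> int (3 * t + 1)" unfolding t_def by simp
  have "int (3 * t + 1) \<ge> n0 l" using b1 b2 b3 by linarith
  then have "Delta l (3 * t + 1) > 0" using assms(1) l(2) by simp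
  moreover have "Delta l (3 * t + 1) < 0" using L0 l(1) by blast
  ultimately show False by simp
qed


end
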